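(* Let $\mathcal{A}$ be a unital algebra generated by two unital subalgebras $\mathcal{A}_1,\mathcal{A}_2$. Let $\mathcal{I}_1$ (resp. $\mathcal{I}_2$) be an ideal of $\mathcal{A}_1$ (resp. $\mathcal{A}_2$) and $\mathcal{I}$ the ideal of $\mathcal{A}$ generated by $\mathcal{I}_1\cup \mathcal{I}_2$. Let $\tau: \mathcal{A}\to \mathbb{C}$ be a unital linear functional with $\mathcal{I}\subset \ker(\tau)$ and $\tau': \mathcal{I}\to \mathbb{C}$ a linear functional such that $(\mathcal{A}_1,\mathcal{I}_1)$ and $(\mathcal{A}_2,\mathcal{I}_2)$ are free of type $B$ in $(\mathcal{A},\tau,\mathcal{I},\tau')$. Let $p\in \mathcal{I}_1$ with $\tau'(p)\neq 0$ and define $\varphi:\mathcal{A}\to \mathbb{C}$ by $\varphi(a)=\frac{1}{\tau'(p)}\tau'(p a)$. Then $\varphi$ coincides with $\tau$ on $\mathcal{A}_2$, and $\mathcal{A}_1,\mathcal{A}_2$ are conditionally free with respect to $(\tau,\varphi)$.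
   Context: Freeness of type $B$ in $(\mathcal{A},\tau,\mathcal{I},\tau')$ for $(\mathcal{A}_1,\mathcal{I}_1)$, $(\mathcal{A}_2,\mathcal{I}_2)$: $\mathcal{A}_1,\mathcal{A}_2$ are free w.r.t. $\tau$, and whenever $a_n\in\mathcal{A}_{i_n},\dots,a_1\in\mathcal{A}_{i_1}$, $v\in\mathcal{I}_h$, $b_1\in\mathcal{A}_{j_1},\dots,b_m\in\mathcal{A}_{j_m}$ with any two consecutive indices in $i_n,\dots,i_1,h,j_1,\dots,j_m$ different and all $a_r,b_s$ centered for $\tau$, $\tau'(a_n\cdots a_1vb_1\cdots b_m)=\tau(a_nb_m)\cdots\tau(a_1b_1)\tau'(v)$ if $n=m$ and $i_r=j_r$ for all $r$, and $=0$ otherwise. Conditional freeness w.r.t. $(\tau,\varphi)$: whenever $n>1$, $a_j\in\mathcal{A}_{i_j}$ with consecutive indices different and $\tau(a_j)=0$ for all $j$, $\tau(a_1\cdots a_n)=0$ and $\varphi(a_1\cdots a_n)=\varphi(a_1)\cdots\varphi(a_n)$. *)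

theory Defs
  imports Complex_Main
begin

class cplx_alg_1 = ring_1 +
  fixes cscale :: "complex \<Rightarrow> 'a \<Rightarrow> 'a" (infixr "*\<^sub>C" 75)
  assumes cscale_add_right: "c *\<^sub>C (x + y) = c *\<^sub>C x + c *\<^sub>C y"
    and cscale_add_left: "(b + c) *\<^sub>C x = b *\<^sub>C x + c *\<^sub>C x"
    and cscale_cscale: "b *\<^sub>C (c *\<^sub>C x) = (b * c) *\<^sub>C x"
    and cscale_one: "1 *\<^sub>C x = x"
    and mult_cscale_left: "(c *\<^sub>C x) * y = c *\<^sub>C (x * y)"
    and mult_cscale_right: "x * (c *\<^sub>C y) = c *\<^sub>C (x * y)"

definition csubspace :: "'a::cplx_alg_1 set \<Rightarrow> bool" where
  "csubspace S \<longleftrightarrow> 0 \<in> S \<and> (\<forall>x\<in>S. \<forall>y\<in>S. x + y \<in> S) \<and> (\<forall>c. \<forall>x\<in>S. c *\<^sub>C x \<in> S)"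

definition unital_subalg :: "'a::cplx_alg_1 set \<Rightarrow> bool" where
  "unital_subalg B \<longleftrightarrow> csubspace B \<and> 1 \<in> B \<and> (\<forall>x\<in>B. \<forall>y\<in>B. x * y \<in> B)"

definition alg_generated :: "'a::cplx_alg_1 set \<Rightarrow> 'a set" where
  "alg_generated S = \<Inter>{B. unital_subalg B \<and> S \<subseteq> B}"

definition ideal_of :: "'a::cplx_alg_1 set \<Rightarrow> 'a set \<Rightarrow> bool" where
  "ideal_of I B \<longleftrightarrow> I \<subseteq> B \<and> csubspace I \<and> (\<forall>x\<in>I. \<forall>b\<in>B. b * x \<in> I \<and> x * b \<in> I)"

definition ideal_generated :: "'a::cplx_alg_1 set \<Rightarrow> 'a set" where
  "ideal_generated S = \<Inter>{J. ideal_of J UNIV \<and> S \<subseteq> J}"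

definition clinear_on :: "'a::cplx_alg_1 set \<Rightarrow> ('a \<Rightarrow> complex) \<Rightarrow> bool" where
  "clinear_on S f \<longleftrightarrow> (\<forall>x\<in>S. \<forall>y\<in>S. f (x + y) = f x + f y) \<and> (\<forall>c. \<forall>x\<in>S. f (c *\<^sub>C x) = c * f x)"

definition fam :: "'b \<Rightarrow> 'b \<Rightarrow> nat \<Rightarrow> 'b" where
  "fam X1 X2 i = (if i = 1 then X1 else X2)"

definition alternating :: "nat list \<Rightarrow> bool" where
  "alternating is \<longleftrightarrow> (\<forall>k. Suc k < length is \<longrightarrow> is ! k \<noteq> is ! Suc k)"

definition free_wrt :: "('a::cplx_alg_1 \<Rightarrow> complex) \<Rightarrow> 'a set \<Rightarrow> 'a set \<Rightarrow> bool" where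
  "free_wrt \<tau> A1 A2 \<longleftrightarrow>
    (\<forall>as is. length as = length is \<and> length as \<ge> 1 \<and> set is \<subseteq> {1, 2} \<and> alternating is
       \<and> (\<forall>j < length as. as ! j \<in> fam A1 A2 (is ! j) \<and> \<tau> (as ! j) = 0)
       \<longrightarrow> \<tau> (prod_list as) = 0)"

text \<open>The list as = [a_1,...,a_n]
  with indices is = [i_1,...,i_n], so the product a_n ... a_1 is prod_list (rev as) and the index
  sequence i_n,...,i_1,h,j_1,...,j_m is rev is @ [h] @ js.\<close>
definition free_type_B ::
  "('a::cplx_alg_1 \<Rightarrow> complex) \<Rightarrow> 'a set \<Rightarrow> ('a \<Rightarrow> complex) \<Rightarrow> 'a set \<Rightarrow> 'a set \<Rightarrow> 'a set \<Rightarrow> 'a set \<Rightarrow> bool"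
  where
  "free_type_B \<tau> I \<tau>' A1 I1 A2 I2 \<longleftrightarrow> free_wrt \<tau> A1 A2 \<and>
    (\<forall>as is v h bs js.
       length as = length is \<and> length bs = length js \<and> set is \<subseteq> {1, 2} \<and> set js \<subseteq> {1, 2}
       \<and> h \<in> {1, 2} \<and> v \<in> fam I1 I2 h
       \<and> (\<forall>r < length as. as ! r \<in> fam A1 A2 (is ! r) \<and> \<tau> (as ! r) = 0)
       \<and> (\<forall>s < length bs. bs ! s \<in> fam A1 A2 (js ! s) \<and> \<tau> (bs ! s) = 0)
       \<and> alternating (rev is @ [h] @ js)
       \<longrightarrow> \<tau>' (prod_list (rev as) * v * prod_list bs) =
           (if length as = length bs \<and> (\<forall>r < length as. is ! r = js ! r)
            then (\<Prod>r < length as. \<tau> (as ! r * bs ! r)) * \<tau>' v else 0))"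

definition cond_free :: "('a::cplx_alg_1 \<Rightarrow> complex) \<Rightarrow> ('a \<Rightarrow> complex) \<Rightarrow> 'a set \<Rightarrow> 'a set \<Rightarrow> bool" where
  "cond_free \<tau> \<phi> A1 A2 \<longleftrightarrow>
    (\<forall>as is. length as = length is \<and> length as > 1 \<and> set is \<subseteq> {1, 2} \<and> alternating is
       \<and> (\<forall>j < length as. as ! j \<in> fam A1 A2 (is ! j) \<and> \<tau> (as ! j) = 0)
       \<longrightarrow> \<tau> (prod_list as) = 0 \<and> \<phi> (prod_list as) = prod_list (map \<phi> as))"

end

theory Submission
  imports Defs
begin

lemma cscale_zero_left': "(0::complex) *\<^sub>C (x::'a::cplx_alg_1) = 0"
proof -
  have "(0::complex) *\<^sub>C x = 0 *\<^sub>C x + 0 *\<^sub>C x"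
    using cscale_add_left[of 0 0 x] by simp
  then show ?thesis by simp
qed

lemma cscale_neg1: "(-1::complex) *\<^sub>C (x::'a::cplx_alg_1) = - x"
proof -
  have "(1 + -1::complex) *\<^sub>C x = 1 *\<^sub>C x + (-1) *\<^sub>C x" by (rule cscale_add_left)
  then have "0 = x + (-1) *\<^sub>C x" by (simp add: cscale_zero_left' cscale_one)
  then show ?thesis by (simp add: eq_neg_iff_add_eq_0 add.commute)
qed

lemma all_nat_split: "(\<forall>k::nat. P k) = (P 0 \<and> (\<forall>k. P (Suc k)))"
  by (metis not0_implies_Suc)

lemma alternating_Cons:
  "alternating (h # js) \<longleftrightarrow> (js = [] \<or> h \<noteq> hd js) \<and> alternating js"
  unfolding alternating_def
  apply (subst all_nat_split)
  apply (cases js)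
   apply (auto simp: hd_conv_nth)
  done

lemma ideal_gen_mult:
  assumes "p \<in> S" shows "p * y \<in> ideal_generated S"
  using assms unfolding ideal_generated_def ideal_of_def by blast

theorem proposition2p12:
  fixes A1 A2 I1 I2 :: "'a::cplx_alg_1 set"
    and \<tau> \<tau>' \<phi> :: "'a \<Rightarrow> complex"
    and p :: 'a
  assumes "unital_subalg A1" and "unital_subalg A2"
    and "alg_generated (A1 \<union> A2) = UNIV"
    and "ideal_of I1 A1" and "ideal_of I2 A2"
    and "clinear_on UNIV \<tau>" and "\<tau> 1 = 1"
    and "ideal_generated (I1 \<union> I2) \<subseteq> {x. \<tau> x = 0}"
    and "clinear_on (ideal_generated (I1 \<union> I2)) \<tau>'"
    and "free_type_B \<tau> (ideal_generated (I1 \<union> I2)) \<tau>' A1 I1 A2 I2"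
    and "p \<in> I1" and "\<tau>' p \<noteq> 0"
    and "\<phi> = (\<lambda>a. \<tau>' (p * a) / \<tau>' p)"
  shows "(\<forall>a\<in>A2. \<phi> a = \<tau> a) \<and> cond_free \<tau> \<phi> A1 A2"
proof -
  let ?I = "ideal_generated (I1 \<union> I2)"
  have pI: "p * y \<in> ?I" for y using ideal_gen_mult[of p "I1 \<union> I2"] assms(11) by blast
  have tadd: "\<tau> (x + y) = \<tau> x + \<tau> y" "\<tau> (c *\<^sub>C x) = c * \<tau> x" for x y c
    using assms(6) unfolding clinear_on_def by auto
  have t'add: "\<tau>' (x + y) = \<tau>' x + \<tau>' y" "\<tau>' (c *\<^sub>C x) = c * \<tau>' x" if "x \<in> ?I" "y \<in> ?I" for x y c
    using assms(9) that unfolding clinear_on_def by auto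
  have FB: "\<tau>' (v * prod_list bs) = 0"
    if "v \<in> I1" "bs \<noteq> []" "length bs = length js" "set js \<subseteq> {1,2}"
       "\<forall>s < length bs. bs ! s \<in> fam A1 A2 (js ! s) \<and> \<tau> (bs ! s) = 0"
       "alternating (1 # js)" for v bs js
  proof -
    have "\<tau>' (prod_list (rev []) * v * prod_list bs) =
           (if length [] = length bs \<and> (\<forall>r < length []. ([]::nat list) ! r = js ! r)
            then (\<Prod>r < length []. \<tau> ([] ! r * bs ! r)) * \<tau>' v else 0)"
      using assms(10) that unfolding free_type_B_def
      apply -
      apply (elim conjE)
      apply (drule spec[of _ "[]"], drule spec[of _ "[]"], drule spec[of _ v], drule spec[of _ 1],
             drule spec[of _ bs], drule spec[of _ js])
      by (simp add: fam_def)
    then show ?thesis using that(2) by simp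
  qed
  have A2s: "csubspace A2" "1 \<in> A2" using assms(2) unfolding unital_subalg_def by auto
  have part1: "\<phi> a = \<tau> a" if "a \<in> A2" for a
  proof -
    define c where "c = \<tau> a"
    define a0 where "a0 = a + (-1) *\<^sub>C (c *\<^sub>C 1)"
    have a0A: "a0 \<in> A2" using A2s that unfolding a0_def csubspace_def by blast
    have ta0: "\<tau> a0 = 0" unfolding a0_def by (simp add: tadd assms(7) c_def)
    have aeq: "a = c *\<^sub>C 1 + a0" unfolding a0_def cscale_neg1 by simp
    have "p * a = c *\<^sub>C p + p * a0" unfolding aeq by (simp add: distrib_left mult_cscale_right)
    moreover have "c *\<^sub>C p = p * (c *\<^sub>C 1)" by (simp add: mult_cscale_right)
    ultimately have "\<tau>' (p * a) = c * \<tau>' p + \<tau>' (p * a0)"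
      using t'add pI by (metis mult.right_neutral)
    moreover have "\<tau>' (p * a0) = 0"
      using FB[of p "[a0]" "[2]"] assms(11) a0A ta0 by (simp add: fam_def alternating_def)
    ultimately show ?thesis using assms(12,13) c_def by simp
  qed
  have "cond_free \<tau> \<phi> A1 A2"
    unfolding cond_free_def
  proof (intro allI impI conjI)
    fix as "is" assume H: "length as = length is \<and> length as > 1 \<and> set is \<subseteq> {1, 2} \<and> alternating is
       \<and> (\<forall>j < length as. as ! j \<in> fam A1 A2 (is ! j) \<and> \<tau> (as ! j) = 0)"
    have fw: "free_wrt \<tau> A1 A2" using assms(10) unfolding free_type_B_def by blast
    show "\<tau> (prod_list as) = 0"
    proof -
      have "length as \<ge> 1" using H by linarith
      then show ?thesis using fw H unfolding free_wrt_def by blast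
    qed
    have l2: "length as \<ge> 2" "length is \<ge> 2" using H by auto
    have "\<exists>a1 a2 r. as = a1 # a2 # r" using l2(1)
      by (cases as; cases "tl as"; simp)
    then obtain a1 a2 r where as: "as = a1 # a2 # r" by blast
    have "\<exists>i1 i2 s. is = i1 # i2 # s" using l2(2)
      by (cases "is"; cases "tl is"; simp)
    then obtain i1 i2 s where is_: "is = i1 # i2 # s" by blast
    have alt: "i1 \<noteq> i2" "alternating (i2 # s)" using H is_ by (auto simp: alternating_Cons)
    have i12: "i1 \<in> {1,2}" "i2 \<in> {1,2}" using H is_ by auto
    have restall: "\<forall>j < length as. as ! j \<in> fam A1 A2 (is ! j) \<and> \<tau> (as ! j) = 0" using H by blast
    have m0: "as ! 0 \<in> fam A1 A2 (is ! 0) \<and> \<tau> (as ! 0) = 0" using restall[rule_format, of 0] as by simp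
    have m1: "as ! 1 \<in> fam A1 A2 (is ! 1) \<and> \<tau> (as ! 1) = 0" using restall[rule_format, of 1] as by simp
    have mem: "a1 \<in> fam A1 A2 i1" "\<tau> a1 = 0" "a2 \<in> fam A1 A2 i2" "\<tau> a2 = 0"
      using m0 m1 as is_ by auto
    have rest: "\<forall>j < length (a2 # r). (a2 # r) ! j \<in> fam A1 A2 ((i2 # s) ! j) \<and> \<tau> ((a2 # r) ! j) = 0"
    proof (intro allI impI)
      fix j assume "j < length (a2 # r)"
      then have "Suc j < length as" using as by simp
      then show "(a2 # r) ! j \<in> fam A1 A2 ((i2 # s) ! j) \<and> \<tau> ((a2 # r) ! j) = 0"
        using restall[rule_format, of "Suc j"] as is_ by simp
    qed
    have sets: "set (i2 # s) \<subseteq> {1,2}" "set is \<subseteq> {1,2}" using H is_ by auto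
    show "\<phi> (prod_list as) = prod_list (map \<phi> as)"
    proof (cases "i1 = 1")
      case True
      then have i2: "i2 = 2" using alt i12 by auto
      have "\<phi> a2 = 0" using part1 mem i2 by (simp add: fam_def)
      then have r: "prod_list (map \<phi> as) = 0" using as by simp
      have pa1: "p * a1 \<in> I1" using assms(4,11) mem True unfolding ideal_of_def fam_def by simp
      have "\<tau>' ((p * a1) * prod_list (a2 # r)) = 0"
        using FB[OF pa1, of "a2 # r" "i2 # s"] H as is_ rest sets alt i2
        by (simp add: alternating_Cons)
      then show ?thesis using r as assms(13) by (simp add: mult.assoc)
    next
      case False
      then have i1: "i1 = 2" using i12 by auto
      have "\<phi> a1 = 0" using part1 mem i1 by (simp add: fam_def)
      then have r: "prod_list (map \<phi> as) = 0" using as by simp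
      have "\<tau>' (p * prod_list as) = 0"
        using FB[OF assms(11), of as "is"] H as is_ restall sets i1
        by (simp add: alternating_Cons)
      then show ?thesis using r assms(13) by simp
    qed
  qed
  then show ?thesis using part1 by blast
qed

end
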